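(* Let $\mathcal{F}[0,1]$ be a Banach algebra (over $\mathbb{F}\in\{\mathbb{R},\mathbb{C}\}$, with pointwise operations, norm $\|\cdot\|_{\mathcal F}$) of functions $[0,1]\to\mathbb{F}$ that is continuously embedded into $B[0,1]$. Suppose $\mathcal{F}[0,1]$ satisfies the symmetry property, the inverse closedness property and the selection principle. Then the multiplication in $\mathcal{F}[0,1]$ is locally open at every pair of jointly nondegenerate functions $(F,G)\in(\mathcal{F}[0,1])^2$; i.e. for every $\varepsilon>0$ there is $\delta>0$ such that every $u\in\mathcal F[0,1]$ with $\|u-FG\|_{\mathcal F}<\delta$ can be written as $u=fg$ with $f,g\in\mathcal F[0,1]$, $\|f-F\|_{\mathcal F}<\varepsilon$, $\|g-G\|_{\mathcal F}<\varepsilon$.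
   Context: $B[0,1]$ denotes the Banach algebra of all bounded functions $f:[0,1]\to\mathbb{F}$ with norm $\|f\|_\infty=\sup_{x\in[0,1]}|f(x)|$. Functions $f,g\in B[0,1]$ are jointly nondegenerate if $\inf_{x\in[0,1]}(|f(x)|+|g(x)|)>0$. $\mathcal F[0,1]$ has the symmetry property if for every $f\in\mathcal F[0,1]$ its complex conjugate $\overline f\in\mathcal F[0,1]$ and $\|\overline f\|_{\mathcal F}=\|f\|_{\mathcal F}$. It has the inverse closedness property if for every $f\in\mathcal F[0,1]$ with $\inf_{x\in[0,1]}|f(x)|>0$ one has $1/f\in\mathcal F[0,1]$ and $\|1/f\|_{\mathcal F}\le(\inf_{x\in[0,1]}|f(x)|)^{-2}\|f\|_{\mathcal F}$. It satisfies the selection principle if every sequence $(f_n)$ with $\sup_n\|f_n\|_{\mathcal F}<\infty$ has a subsequence converging pointwise on $[0,1]$ to some $f\in\mathcal F[0,1]$. Multiplication is locally open at $(a,b)$ if for every $\varepsilon>0$ there is $\delta>0$ with $B(ab,\delta)\subset B(a,\varepsilon)\cdot B(b,\varepsilon)$, where $B(a,r)$ is the open ball of radius $r$ about $a$ and $X\cdot Y=\{xy: x\in X, y\in Y\}$. *)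

theory Defs
  imports "HOL-Analysis.Analysis"
begin

text \<open>Functions on [0,1] with values in the scalar field K (K = \<real> or K = \<complex>,
  both seen inside complex), represented as maps real => complex that vanish
  outside [0,1].\<close>

definition fun_banach_algebra ::
  "complex set \<Rightarrow> (real \<Rightarrow> complex) set \<Rightarrow> ((real \<Rightarrow> complex) \<Rightarrow> real) \<Rightarrow> bool" where
  "fun_banach_algebra K A N \<longleftrightarrow>
     (K = \<real> \<or> K = UNIV) \<and>
     (\<forall>f\<in>A. \<forall>x. x \<notin> {0..1} \<longrightarrow> f x = 0) \<and>
     (\<forall>f\<in>A. f ` {0..1} \<subseteq> K) \<and>
     (\<lambda>x. 0) \<in> A \<and>
     (\<forall>f\<in>A. \<forall>g\<in>A. (\<lambda>x. f x + g x) \<in> A) \<and>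
     (\<forall>c\<in>K. \<forall>f\<in>A. (\<lambda>x. c * f x) \<in> A) \<and>
     (\<forall>f\<in>A. \<forall>g\<in>A. (\<lambda>x. f x * g x) \<in> A) \<and>
     (\<forall>f\<in>A. N f \<ge> 0 \<and> (N f = 0 \<longleftrightarrow> f = (\<lambda>x. 0))) \<and>
     (\<forall>f\<in>A. \<forall>g\<in>A. N (\<lambda>x. f x + g x) \<le> N f + N g) \<and>
     (\<forall>c\<in>K. \<forall>f\<in>A. N (\<lambda>x. c * f x) = cmod c * N f) \<and>
     (\<forall>f\<in>A. \<forall>g\<in>A. N (\<lambda>x. f x * g x) \<le> N f * N g) \<and>
     (\<forall>fs :: nat \<Rightarrow> real \<Rightarrow> complex. (\<forall>n. fs n \<in> A) \<and>
           (\<forall>e>0. \<exists>M. \<forall>m\<ge>M. \<forall>n\<ge>M. N (\<lambda>x. fs m x - fs n x) < e)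
           \<longrightarrow> (\<exists>f\<in>A. (\<lambda>n. N (\<lambda>x. fs n x - f x)) \<longlonglongrightarrow> 0))"

definition cont_embedded_B :: "(real \<Rightarrow> complex) set \<Rightarrow> ((real \<Rightarrow> complex) \<Rightarrow> real) \<Rightarrow> bool" where
  "cont_embedded_B A N \<longleftrightarrow> (\<exists>C. \<forall>f\<in>A. \<forall>x\<in>{0..1}. cmod (f x) \<le> C * N f)"

definition symmetry_property :: "(real \<Rightarrow> complex) set \<Rightarrow> ((real \<Rightarrow> complex) \<Rightarrow> real) \<Rightarrow> bool" where
  "symmetry_property A N \<longleftrightarrow>
     (\<forall>f\<in>A. (\<lambda>x. cnj (f x)) \<in> A \<and> N (\<lambda>x. cnj (f x)) = N f)"

text \<open>Pointwise inverse; outside [0,1] it is 0 since inverse 0 = 0.\<close>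
definition inverse_closedness :: "(real \<Rightarrow> complex) set \<Rightarrow> ((real \<Rightarrow> complex) \<Rightarrow> real) \<Rightarrow> bool" where
  "inverse_closedness A N \<longleftrightarrow>
     (\<forall>f\<in>A. (INF x\<in>{0..1}. cmod (f x)) > 0 \<longrightarrow>
        (\<lambda>x. inverse (f x)) \<in> A \<and>
        N (\<lambda>x. inverse (f x)) \<le> (INF x\<in>{0..1}. cmod (f x)) powi (-2) * N f)"

definition selection_principle :: "(real \<Rightarrow> complex) set \<Rightarrow> ((real \<Rightarrow> complex) \<Rightarrow> real) \<Rightarrow> bool" where
  "selection_principle A N \<longleftrightarrow>
     (\<forall>fs :: nat \<Rightarrow> real \<Rightarrow> complex. (\<forall>n. fs n \<in> A) \<and> (\<exists>B. \<forall>n. N (fs n) \<le> B) \<longrightarrow>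
        (\<exists>r f. strict_mono r \<and> f \<in> A \<and> (\<forall>x\<in>{0..1}. (\<lambda>n. fs (r n) x) \<longlonglongrightarrow> f x)))"

definition jointly_nondegenerate :: "(real \<Rightarrow> complex) \<Rightarrow> (real \<Rightarrow> complex) \<Rightarrow> bool" where
  "jointly_nondegenerate f g \<longleftrightarrow> (INF x\<in>{0..1}. cmod (f x) + cmod (g x)) > 0"

definition mult_locally_open_at ::
  "(real \<Rightarrow> complex) set \<Rightarrow> ((real \<Rightarrow> complex) \<Rightarrow> real) \<Rightarrow> (real \<Rightarrow> complex) \<Rightarrow> (real \<Rightarrow> complex) \<Rightarrow> bool" where
  "mult_locally_open_at A N a b \<longleftrightarrow>
     (\<forall>\<epsilon>>0. \<exists>\<delta>>0. \<forall>u\<in>A. N (\<lambda>x. u x - a x * b x) < \<delta> \<longrightarrow>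
        (\<exists>f\<in>A. \<exists>g\<in>A. u = (\<lambda>x. f x * g x) \<and>
           N (\<lambda>x. f x - a x) < \<epsilon> \<and> N (\<lambda>x. g x - b x) < \<epsilon>))"

end

theory Submission
  imports Defs
begin

context
  fixes K :: "complex set" and A :: "(real \<Rightarrow> complex) set"
    and N :: "(real \<Rightarrow> complex) \<Rightarrow> real"
  assumes fba: "fun_banach_algebra K A N"
begin

lemma out: "f \<in> A \<Longrightarrow> x \<notin> {0..1} \<Longrightarrow> f x = 0"
  using fba[unfolded fun_banach_algebra_def,THEN conjunct2, THEN conjunct1] by blast
lemma realK: "complex_of_real c \<in> K"
  using fba[unfolded fun_banach_algebra_def, THEN conjunct1] by auto
lemma zeroA: "(\<lambda>x. 0) \<in> A"
  using fba[unfolded fun_banach_algebra_def,THEN conjunct2, THEN conjunct2, THEN conjunct2, THEN conjunct1] by blast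
lemma addA: "f \<in> A \<Longrightarrow> g \<in> A \<Longrightarrow> (\<lambda>x. f x + g x) \<in> A"
  using fba[unfolded fun_banach_algebra_def,THEN conjunct2, THEN conjunct2, THEN conjunct2, THEN conjunct2, THEN conjunct1] by blast
lemma scaleA: "c \<in> K \<Longrightarrow> f \<in> A \<Longrightarrow> (\<lambda>x. c * f x) \<in> A"
  using fba[unfolded fun_banach_algebra_def,THEN conjunct2, THEN conjunct2, THEN conjunct2, THEN conjunct2, THEN conjunct2, THEN conjunct1] by blast
lemma multA: "f \<in> A \<Longrightarrow> g \<in> A \<Longrightarrow> (\<lambda>x. f x * g x) \<in> A"
  using fba[unfolded fun_banach_algebra_def,THEN conjunct2, THEN conjunct2, THEN conjunct2, THEN conjunct2, THEN conjunct2, THEN conjunct2, THEN conjunct1] by blast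
lemma Nnn: "f \<in> A \<Longrightarrow> N f \<ge> 0"
  using fba[unfolded fun_banach_algebra_def,THEN conjunct2, THEN conjunct2, THEN conjunct2, THEN conjunct2, THEN conjunct2, THEN conjunct2, THEN conjunct2, THEN conjunct1] by blast
lemma N0: "f \<in> A \<Longrightarrow> N f = 0 \<longleftrightarrow> f = (\<lambda>x. 0)"
  using fba[unfolded fun_banach_algebra_def,THEN conjunct2, THEN conjunct2, THEN conjunct2, THEN conjunct2, THEN conjunct2, THEN conjunct2, THEN conjunct2, THEN conjunct1] by blast
lemma Nadd: "f \<in> A \<Longrightarrow> g \<in> A \<Longrightarrow> N (\<lambda>x. f x + g x) \<le> N f + N g"
  using fba[unfolded fun_banach_algebra_def,THEN conjunct2, THEN conjunct2, THEN conjunct2, THEN conjunct2, THEN conjunct2, THEN conjunct2, THEN conjunct2, THEN conjunct2, THEN conjunct1] by blast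
lemma Nscale: "c \<in> K \<Longrightarrow> f \<in> A \<Longrightarrow> N (\<lambda>x. c * f x) = cmod c * N f"
  using fba[unfolded fun_banach_algebra_def,THEN conjunct2, THEN conjunct2, THEN conjunct2, THEN conjunct2, THEN conjunct2, THEN conjunct2, THEN conjunct2, THEN conjunct2, THEN conjunct2, THEN conjunct1] by blast
lemma Nmult: "f \<in> A \<Longrightarrow> g \<in> A \<Longrightarrow> N (\<lambda>x. f x * g x) \<le> N f * N g"
  using fba[unfolded fun_banach_algebra_def,THEN conjunct2, THEN conjunct2, THEN conjunct2, THEN conjunct2, THEN conjunct2, THEN conjunct2, THEN conjunct2, THEN conjunct2, THEN conjunct2, THEN conjunct2, THEN conjunct1] by blast
lemma completeA: "(\<forall>n. fs n \<in> A) \<Longrightarrow> (\<forall>e>0. \<exists>M. \<forall>m\<ge>M. \<forall>n\<ge>M. N (\<lambda>x. fs m x - fs n x) < e)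
   \<Longrightarrow> \<exists>f\<in>A. (\<lambda>n. N (\<lambda>x. fs n x - f x)) \<longlonglongrightarrow> 0"
  using fba[unfolded fun_banach_algebra_def,THEN conjunct2, THEN conjunct2, THEN conjunct2, THEN conjunct2, THEN conjunct2, THEN conjunct2, THEN conjunct2, THEN conjunct2, THEN conjunct2, THEN conjunct2, THEN conjunct2] by blast

lemma negA: "f \<in> A \<Longrightarrow> (\<lambda>x. - f x) \<in> A"
  using scaleA[OF realK[of "-1"]] by simp
lemma diffA: "f \<in> A \<Longrightarrow> g \<in> A \<Longrightarrow> (\<lambda>x. f x - g x) \<in> A"
  using addA[OF _ negA[of g], of f] by simp
lemma Nneg: "f \<in> A \<Longrightarrow> N (\<lambda>x. - f x) = N f"
  using Nscale[OF realK[of "-1"]] by simp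
lemma Ndiff_sym: "f \<in> A \<Longrightarrow> g \<in> A \<Longrightarrow> N (\<lambda>x. f x - g x) = N (\<lambda>x. g x - f x)"
  using Nneg[OF diffA[of g f]] by simp
lemma Ntri: "f \<in> A \<Longrightarrow> g \<in> A \<Longrightarrow> h \<in> A \<Longrightarrow>
   N (\<lambda>x. f x - h x) \<le> N (\<lambda>x. f x - g x) + N (\<lambda>x. g x - h x)"
  using Nadd[OF diffA[of f g] diffA[of g h]] by simp
lemma Nzero: "N (\<lambda>x. 0) = 0"
  using N0[OF zeroA] by simp
lemma eq_of_N: "f \<in> A \<Longrightarrow> g \<in> A \<Longrightarrow> N (\<lambda>x. f x - g x) \<le> 0 \<Longrightarrow> f = g"
proof -
  assume a: "f \<in> A" "g \<in> A" "N (\<lambda>x. f x - g x) \<le> 0"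
  then have "N (\<lambda>x. f x - g x) = 0" using Nnn[OF diffA[OF a(1,2)]] by linarith
  then have "(\<lambda>x. f x - g x) = (\<lambda>x. 0)" using N0[OF diffA[OF a(1,2)]] by simp
  then show "f = g"
  proof -
    assume e: "(\<lambda>x. f x - g x) = (\<lambda>x. 0)"
    show "f = g"
    proof
      fix x show "f x = g x" using fun_cong[OF e, of x] by simp
    qed
  qed
qed

lemma Ndiff_le: "f \<in> A \<Longrightarrow> g \<in> A \<Longrightarrow> N (\<lambda>x. f x - g x) \<le> N f + N g"
  using Nadd[OF _ negA[of g], of f] Nneg[of g] by simp

lemma fixpoint:
  assumes R: "R > 0"
    and maps: "\<And>s. s \<in> A \<Longrightarrow> N s \<le> R \<Longrightarrow> T s \<in> A \<and> N (T s) \<le> R"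
    and contr: "\<And>s t. s \<in> A \<Longrightarrow> t \<in> A \<Longrightarrow> N s \<le> R \<Longrightarrow> N t \<le> R \<Longrightarrow>
        N (\<lambda>x. T s x - T t x) \<le> 1/2 * N (\<lambda>x. s x - t x)"
  shows "\<exists>s\<in>A. N s \<le> R \<and> T s = s"
proof -
  define S where "S n = (T ^^ n) (\<lambda>x. 0)" for n
  have S_Suc: "S (Suc n) = T (S n)" for n by (simp add: S_def)
  have SA: "S n \<in> A \<and> N (S n) \<le> R" for n
  proof (induction n)
    case 0 show ?case using zeroA Nzero R by (simp add: S_def)
  next
    case (Suc n) then show ?case using maps[of "S n"] by (simp add: S_Suc)
  qed
  define D where "D = N (\<lambda>x. S 1 x - S 0 x)"
  have D0: "D \<ge> 0" unfolding D_def using Nnn diffA SA by blast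
  have step: "N (\<lambda>x. S (Suc n) x - S n x) \<le> D * (1/2)^n" for n
  proof (induction n)
    case 0 show ?case by (simp add: D_def)
  next
    case (Suc n)
    have "N (\<lambda>x. S (Suc (Suc n)) x - S (Suc n) x) \<le> 1/2 * N (\<lambda>x. S (Suc n) x - S n x)"
      using contr[of "S (Suc n)" "S n"] SA[of n] SA[of "Suc n"] by (simp add: S_Suc)
    also have "\<dots> \<le> 1/2 * (D * (1/2)^n)" using Suc by simp
    finally show ?case by simp
  qed
  have cauchy: "N (\<lambda>x. S (n + k) x - S n x) \<le> 2 * D * (1/2)^n" for n k
  proof (induction k arbitrary: n)
    case 0 show ?case using D0 by (simp add: Nzero)
  next
    case (Suc k)
    have "N (\<lambda>x. S (n + Suc k) x - S n x) \<le> N (\<lambda>x. S (Suc n + k) x - S (Suc n) x) + N (\<lambda>x. S (Suc n) x - S n x)"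
      using Ntri[of "S (Suc n + k)" "S (Suc n)" "S n"] SA by simp
    also have "\<dots> \<le> 2*D*(1/2)^(Suc n) + D*(1/2)^n" using Suc.IH[of "Suc n"] step[of n] by linarith
    also have "\<dots> = 2*D*(1/2)^n" by simp
    finally show ?case .
  qed
  have "\<forall>e>0. \<exists>M. \<forall>m\<ge>M. \<forall>n\<ge>M. N (\<lambda>x. S m x - S n x) < e"
  proof (intro allI impI)
    fix e :: real assume e: "e > 0"
    obtain M where M: "(1/2::real)^M < e / (2*D+1)"
      using real_arch_pow_inv[of "e / (2*D+1)" "1/2"] e D0 by auto
    have M2: "2*D*(1/2)^M < e"
    proof -
      have "2*D*(1/2::real)^M \<le> (2*D+1)*(1/2)^M" by simp
      also have "\<dots> < (2*D+1) * (e / (2*D+1))" using M D0 by (intro mult_strict_left_mono) auto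
      also have "\<dots> = e" using D0 by simp
      finally show ?thesis .
    qed
    have key: "N (\<lambda>x. S m x - S n x) \<le> 2*D*(1/2)^M" if "n \<le> m" "M \<le> n" for m n
    proof -
      have "N (\<lambda>x. S m x - S n x) \<le> 2 * D * (1/2)^n"
        using cauchy[of n "m - n"] that by simp
      also have "\<dots> \<le> 2*D*(1/2)^M"
        using that D0 by (intro mult_left_mono power_decreasing) auto
      finally show ?thesis .
    qed
    show "\<exists>M. \<forall>m\<ge>M. \<forall>n\<ge>M. N (\<lambda>x. S m x - S n x) < e"
    proof (intro exI allI impI)
      fix m n assume mn: "m \<ge> M" "n \<ge> M"
      show "N (\<lambda>x. S m x - S n x) < e"
      proof (cases "n \<le> m")
        case True then show ?thesis using key[of n m] mn M2 by linarith
      next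
        case False then show ?thesis using key[of m n] mn M2 Ndiff_sym[of "S m" "S n"] SA by force
      qed
    qed
  qed
  then obtain s where s: "s \<in> A" "(\<lambda>n. N (\<lambda>x. S n x - s x)) \<longlonglongrightarrow> 0"
    using completeA[of S] SA by blast
  have Ns: "N s \<le> R"
  proof -
    have "N s - R \<le> N (\<lambda>x. S n x - s x)" for n
    proof -
      have "N (\<lambda>x. s x - 0) \<le> N (\<lambda>x. s x - S n x) + N (\<lambda>x. S n x - 0)"
        using Ntri[of s "S n" "\<lambda>x. 0"] s SA zeroA by blast
      then show ?thesis using Ndiff_sym[of s "S n"] s SA[of n] by simp
    qed
    then have "N s - R \<le> 0" using LIMSEQ_le_const[OF s(2)] by blast
    then show ?thesis by simp
  qed
  have TsA: "T s \<in> A" using maps s Ns by blast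
  have b: "N (\<lambda>x. T s x - s x) \<le> 1/2 * N (\<lambda>x. S n x - s x) + N (\<lambda>x. S (Suc n) x - s x)" for n
  proof -
    have "N (\<lambda>x. T s x - s x) \<le> N (\<lambda>x. T s x - T (S n) x) + N (\<lambda>x. T (S n) x - s x)"
      using Ntri[of "T s" "T (S n)" s] TsA SA[of n] maps[of "S n"] s by blast
    moreover have "N (\<lambda>x. T s x - T (S n) x) \<le> 1/2 * N (\<lambda>x. s x - S n x)"
      using contr[of s "S n"] s Ns SA[of n] by blast
    ultimately show ?thesis using Ndiff_sym[of s "S n"] s SA[of n] by (simp add: S_Suc)
  qed
  have "(\<lambda>n. 1/2 * N (\<lambda>x. S n x - s x) + N (\<lambda>x. S (Suc n) x - s x)) \<longlonglongrightarrow> 1/2 * 0 + 0"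
    by (intro tendsto_add tendsto_mult tendsto_const s(2) LIMSEQ_Suc[OF s(2)])
  then have "N (\<lambda>x. T s x - s x) \<le> 0"
    using LIMSEQ_le_const[of _ 0 "N (\<lambda>x. T s x - s x)"] b by simp
  then have "T s = s" using eq_of_N TsA s by blast
  then show ?thesis using s Ns by blast
qed

end

theorem theorem2p1:
  fixes K :: "complex set" and A :: "(real \<Rightarrow> complex) set"
    and N :: "(real \<Rightarrow> complex) \<Rightarrow> real"
  assumes "fun_banach_algebra K A N"
    and "cont_embedded_B A N"
    and "symmetry_property A N"
    and "inverse_closedness A N"
    and "selection_principle A N"
  shows "\<forall>F\<in>A. \<forall>G\<in>A. jointly_nondegenerate F G \<longrightarrow> mult_locally_open_at A N F G"
proof (intro ballI impI)
  note fba = assms(1)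
  fix F G assume FA: "F \<in> A" and GA: "G \<in> A" and jn: "jointly_nondegenerate F G"
  define m where "m = (INF x\<in>{0..1}. cmod (F x) + cmod (G x))"
  have m0: "m > 0" using jn unfolding jointly_nondegenerate_def m_def .
  have mle: "m \<le> cmod (F x) + cmod (G x)" if "x \<in> {0..1}" for x
    unfolding m_def by (rule cINF_lower[OF _ that]) (auto intro: bdd_belowI[of _ 0])
  define Fc where "Fc = (\<lambda>x. cnj (F x))"
  define Gc where "Gc = (\<lambda>x. cnj (G x))"
  have FcA: "Fc \<in> A" and GcA: "Gc \<in> A"
    using assms(3) FA GA unfolding symmetry_property_def Fc_def Gc_def by auto
  define h where "h = (\<lambda>x. F x * Fc x + G x * Gc x)"
  have hA: "h \<in> A" unfolding h_def using addA[OF fba multA[OF fba FA FcA] multA[OF fba GA GcA]] .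
  have hx: "h x = complex_of_real ((cmod (F x))\<^sup>2 + (cmod (G x))\<^sup>2)" for x
    unfolding h_def Fc_def Gc_def by (simp only: complex_norm_square of_real_add)
  have hbound: "m\<^sup>2 / 2 \<le> cmod (h x)" if "x \<in> {0..1}" for x
  proof -
    have a: "m \<le> cmod (F x) + cmod (G x)" using mle that .
    have "m\<^sup>2 \<le> (cmod (F x) + cmod (G x))\<^sup>2" using a m0 by (intro power_mono) auto
    also have "\<dots> \<le> 2 * ((cmod (F x))\<^sup>2 + (cmod (G x))\<^sup>2)"
    proof -
      have "0 \<le> (cmod (F x) - cmod (G x))\<^sup>2" by simp
      then show ?thesis by (simp add: power2_eq_square algebra_simps)
    qed
    finally have *: "m\<^sup>2 / 2 \<le> (cmod (F x))\<^sup>2 + (cmod (G x))\<^sup>2" by simp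
    have "cmod (h x) = \<bar>(cmod (F x))\<^sup>2 + (cmod (G x))\<^sup>2\<bar>" by (simp only: hx norm_of_real)
    then show ?thesis using * by simp
  qed
  have hinf: "(INF x\<in>{0..1}. cmod (h x)) > 0"
  proof -
    have "m\<^sup>2 / 2 \<le> (INF x\<in>{0..1}. cmod (h x))"
      by (rule cINF_greatest) (use hbound in auto)
    moreover have "m\<^sup>2 / 2 > 0" using m0 by simp
    ultimately show ?thesis by linarith
  qed
  have hnz: "h x \<noteq> 0" if "x \<in> {0..1}" for x
  proof -
    have "m\<^sup>2 / 2 > 0" using m0 by simp
    then have "cmod (h x) > 0" using hbound[OF that] by linarith
    then show ?thesis by auto
  qed
  define r where "r = (\<lambda>x. inverse (h x))"
  have rA: "r \<in> A" using assms(4) hA hinf unfolding inverse_closedness_def r_def by blast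
  define q where "q = (\<lambda>x. Fc x * Gc x)"
  have qA: "q \<in> A" unfolding q_def using multA[OF fba FcA GcA] .
  define p where "p = (\<lambda>x. r x * q x)"
  have pA: "p \<in> A" unfolding p_def using multA[OF fba rA qA] .
  define P where "P = N p"
  define \<rho> where "\<rho> = N r"
  have P0: "P \<ge> 0" unfolding P_def using Nnn[OF fba pA] .
  have \<rho>0: "\<rho> \<ge> 0" unfolding \<rho>_def using Nnn[OF fba rA] .
  have NFc0: "N Fc \<ge> 0" and NGc0: "N Gc \<ge> 0" using Nnn[OF fba FcA] Nnn[OF fba GcA] by auto
  show "mult_locally_open_at A N F G"
    unfolding mult_locally_open_at_def
  proof (intro allI impI)
    fix \<epsilon> :: real assume \<epsilon>: "\<epsilon> > 0"
    define R where "R = min (\<epsilon> / (2 * (N Fc + N Gc + 1))) (1 / (4 * (P + 1)))"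
    have R0: "R > 0" unfolding R_def using \<epsilon> NFc0 NGc0 P0 by auto
    have RP: "P * R \<le> 1/4"
    proof -
      have "P * R \<le> (P + 1) * (1 / (4 * (P + 1)))"
        using P0 R0 unfolding R_def by (intro mult_mono) auto
      also have "\<dots> = 1/4" using P0 by simp
      finally show ?thesis .
    qed
    have RGc: "N Gc * R < \<epsilon>" and RFc: "N Fc * R < \<epsilon>"
    proof -
      have "(N Fc + N Gc + 1) * R \<le> (N Fc + N Gc + 1) * (\<epsilon> / (2 * (N Fc + N Gc + 1)))"
        unfolding R_def using NFc0 NGc0 by (intro mult_left_mono) auto
      also have "\<dots> = \<epsilon> / 2" using NFc0 NGc0 by (simp add: field_simps)
      finally have *: "(N Fc + N Gc + 1) * R \<le> \<epsilon> / 2" .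
      have "N Gc * R \<le> (N Fc + N Gc + 1) * R" "N Fc * R \<le> (N Fc + N Gc + 1) * R"
        using R0 NFc0 NGc0 by (auto intro: mult_right_mono)
      then show "N Gc * R < \<epsilon>" "N Fc * R < \<epsilon>" using * \<epsilon> by linarith+
    qed
    define \<delta> where "\<delta> = R / (2 * (\<rho> + 1))"
    have \<delta>0: "\<delta> > 0" unfolding \<delta>_def using R0 \<rho>0 by auto
    have \<rho>\<delta>: "\<rho> * \<delta> \<le> R / 2"
    proof -
      have "\<rho> * \<delta> \<le> (\<rho> + 1) * \<delta>" using \<delta>0 by simp
      also have "\<dots> = R / 2" unfolding \<delta>_def using \<rho>0 by (simp add: field_simps)
      finally show ?thesis .
    qed
    show "\<exists>\<delta>>0. \<forall>u\<in>A. N (\<lambda>x. u x - F x * G x) < \<delta> \<longrightarrow>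
        (\<exists>f\<in>A. \<exists>g\<in>A. u = (\<lambda>x. f x * g x) \<and> N (\<lambda>x. f x - F x) < \<epsilon> \<and> N (\<lambda>x. g x - G x) < \<epsilon>)"
    proof (intro exI conjI ballI impI)
      show "\<delta> > 0" by (rule \<delta>0)
      fix u assume uA: "u \<in> A" and uclose: "N (\<lambda>x. u x - F x * G x) < \<delta>"
      define w where "w = (\<lambda>x. u x - F x * G x)"
      have wA: "w \<in> A" unfolding w_def using diffA[OF fba uA multA[OF fba FA GA]] .
      have Nw: "N w < \<delta>" using uclose unfolding w_def .
      define rw where "rw = (\<lambda>x. r x * w x)"
      have rwA: "rw \<in> A" unfolding rw_def using multA[OF fba rA wA] .
      have Nrw: "N rw \<le> R / 2"
      proof -
        have "N rw \<le> \<rho> * N w" unfolding rw_def \<rho>_def using Nmult[OF fba rA wA] .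
        also have "\<dots> \<le> \<rho> * \<delta>" using Nw \<rho>0 by (intro mult_left_mono) auto
        finally show ?thesis using \<rho>\<delta> by linarith
      qed
      define T where "T = (\<lambda>s x. rw x - p x * (s x * s x))"
      have TA: "T s \<in> A" if "s \<in> A" for s
        unfolding T_def using diffA[OF fba rwA multA[OF fba pA multA[OF fba that that]]] .
      have maps: "T s \<in> A \<and> N (T s) \<le> R" if sA: "s \<in> A" and Ns: "N s \<le> R" for s
      proof
        show "T s \<in> A" using TA[OF sA] .
        have Ns0: "N s \<ge> 0" using Nnn[OF fba sA] .
        have "N (T s) \<le> N rw + N (\<lambda>x. p x * (s x * s x))"
          unfolding T_def using Ndiff_le[OF fba rwA multA[OF fba pA multA[OF fba sA sA]]] .
        also have "N (\<lambda>x. p x * (s x * s x)) \<le> P * (N s * N s)"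
        proof -
          have "N (\<lambda>x. p x * (s x * s x)) \<le> P * N (\<lambda>x. s x * s x)"
            unfolding P_def using Nmult[OF fba pA multA[OF fba sA sA]] .
          also have "\<dots> \<le> P * (N s * N s)" using P0 Nmult[OF fba sA sA] by (intro mult_left_mono) auto
          finally show ?thesis .
        qed
        also have "P * (N s * N s) \<le> P * (R * R)"
          using P0 Ns Ns0 by (intro mult_left_mono mult_mono) auto
        also have "P * (R * R) = (P * R) * R" by (simp add: mult.assoc)
        also have "\<dots> \<le> 1/4 * R" using R0 by (intro mult_right_mono[OF RP]) simp
        also have "\<dots> = R / 4" by simp
        finally show "N (T s) \<le> R" using Nrw R0 by linarith
      qed
      have contr: "N (\<lambda>x. T s x - T t x) \<le> 1/2 * N (\<lambda>x. s x - t x)"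
        if sA: "s \<in> A" and tA: "t \<in> A" and Ns: "N s \<le> R" and Nt: "N t \<le> R" for s t
      proof -
        have eq: "(\<lambda>x. T s x - T t x) = (\<lambda>x. p x * ((t x - s x) * (t x + s x)))"
          unfolding T_def by (auto simp: algebra_simps)
        have dA: "(\<lambda>x. t x - s x) \<in> A" using diffA[OF fba tA sA] .
        have aA: "(\<lambda>x. t x + s x) \<in> A" using addA[OF fba tA sA] .
        have Nd0: "N (\<lambda>x. t x - s x) \<ge> 0" using Nnn[OF fba dA] .
        have "N (\<lambda>x. T s x - T t x) \<le> P * N (\<lambda>x. (t x - s x) * (t x + s x))"
          unfolding eq P_def using Nmult[OF fba pA multA[OF fba dA aA]] by simp
        also have "\<dots> \<le> P * (N (\<lambda>x. t x - s x) * N (\<lambda>x. t x + s x))"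
          using P0 Nmult[OF fba dA aA] by (intro mult_left_mono) auto
        also have "\<dots> \<le> P * (N (\<lambda>x. t x - s x) * (2 * R))"
          using P0 Nd0 Nadd[OF fba tA sA] Ns Nt by (intro mult_left_mono) auto
        also have "\<dots> = 2 * (P * R) * N (\<lambda>x. t x - s x)" by simp
        also have "\<dots> \<le> 2 * (1/4) * N (\<lambda>x. t x - s x)"
          using RP Nd0 by (intro mult_right_mono) auto
        also have "\<dots> = 1/2 * N (\<lambda>x. s x - t x)" using Ndiff_sym[OF fba tA sA] by simp
        finally show ?thesis .
      qed
      obtain s where sA: "s \<in> A" and Ns: "N s \<le> R" and Ts: "T s = s"
        using fixpoint[OF fba R0 maps contr] by blast
      define f where "f = (\<lambda>x. F x + Gc x * s x)"
      define g where "g = (\<lambda>x. G x + Fc x * s x)"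
      have fA: "f \<in> A" unfolding f_def using addA[OF fba FA multA[OF fba GcA sA]] .
      have gA: "g \<in> A" unfolding g_def using addA[OF fba GA multA[OF fba FcA sA]] .
      have Ns0: "N s \<ge> 0" using Nnn[OF fba sA] .
      have "N (\<lambda>x. f x - F x) = N (\<lambda>x. Gc x * s x)" unfolding f_def by simp
      also have "\<dots> \<le> N Gc * N s" using Nmult[OF fba GcA sA] .
      also have "\<dots> \<le> N Gc * R" using Ns NGc0 by (intro mult_left_mono) auto
      finally have fclose: "N (\<lambda>x. f x - F x) < \<epsilon>" using RGc by linarith
      have "N (\<lambda>x. g x - G x) = N (\<lambda>x. Fc x * s x)" unfolding g_def by simp
      also have "\<dots> \<le> N Fc * N s" using Nmult[OF fba FcA sA] .
      also have "\<dots> \<le> N Fc * R" using Ns NFc0 by (intro mult_left_mono) auto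
      finally have gclose: "N (\<lambda>x. g x - G x) < \<epsilon>" using RFc by linarith
      have prod: "u = (\<lambda>x. f x * g x)"
      proof
        fix x
        show "u x = f x * g x"
        proof (cases "x \<in> {0..1}")
          case False
          then show ?thesis using out[OF fba uA False] out[OF fba FA False] out[OF fba GA False] out[OF fba sA False]
            unfolding f_def g_def by simp
        next
          case True
          have sx: "s x = r x * w x - p x * (s x * s x)" using fun_cong[OF Ts, of x]
            unfolding T_def rw_def by simp
          have hs: "h x * s x = w x - q x * (s x * s x)"
            using sx hnz[OF True] unfolding p_def r_def by (simp add: field_simps)
          have "f x * g x = F x * G x + h x * s x + q x * (s x * s x)"
            unfolding f_def g_def h_def q_def by (simp add: algebra_simps)
          also have "\<dots> = u x" using hs unfolding w_def by simp
          finally show ?thesis by simp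
        qed
      qed
      show "\<exists>f\<in>A. \<exists>g\<in>A. u = (\<lambda>x. f x * g x) \<and> N (\<lambda>x. f x - F x) < \<epsilon> \<and> N (\<lambda>x. g x - G x) < \<epsilon>"
        using fA gA prod fclose gclose by blast
    qed
  qed
qed

end
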